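(* Let $S$ be a 2-tangle and write its bracket expansion as $\langle S\rangle = \alpha_S\langle[0]\rangle + \beta_S\langle[\infty]\rangle$. Let $[1]$ denote the one-crossing tangle with $\langle[1]\rangle = A\langle[0]\rangle + A^{-1}\langle[\infty]\rangle$ and $[-1]$ its mirror image, and let $L = N(S+[1])$ and $L' = N(S+[-1])$, oriented (compatibly outside the crossing) so that the crossing of $L$ coming from $[1]$ is a negative crossing (so $w(L') = w(L)+2$). If $L$ and $L'$ have the same Jones polynomial, then $\alpha_S = 0$; that is, $\langle S\rangle = \kappa\langle[\infty]\rangle$ where $\kappa$ is defined by $\langle L\rangle = -A^{-3}\kappa$.
   Context: The bracket polynomial $\langle\cdot\rangle$ is the regular isotopy invariant of unoriented diagrams defined by $\langle \chi\rangle = A\langle \asymp\rangle + A^{-1}\langle >\!<\rangle$ and loop value $d=-A^2-A^{-2}$; the Jones polynomial is determined by $f_K(A) = (-A^3)^{-w(K)}\langle K\rangle$, with $w$ the writhe. A 2-tangle has exterior edges NW, NE, SW, SE. $[0]$ is the crossingless tangle joining NW–NE and SW–SE; $[\infty]$ joins NW–SW and NE–SE. Every tangle satisfies $\langle T\rangle = \alpha_T\langle[0]\rangle+\beta_T\langle[\infty]\rangle$ for well-defined Laurent polynomials $\alpha_T,\beta_T$. The sum $T+S$ attaches NE of $T$ to NW of $S$ and SE of $T$ to SW of $S$. The numerator $N(T)$ is the link obtained by joining NW to NE and SW to SE. *)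

theory Defs
  imports Main "HOL-Computational_Algebra.Formal_Laurent_Series"
begin

text \<open>A crossing (a,b,c,d) lists its four endpoints in cyclic
order; the two strands through it are a--c and b--d.  The crossing is recorded by its
smoothings: the A-smoothing joins a--b and c--d, the B-smoothing joins a--d and b--c.
(Mirroring a crossing swaps A and B, i.e. rotates the tuple by one.)  Arcs join two points.\<close>

type_synonym xing = "nat \<times> nat \<times> nat \<times> nat"
type_synonym arc = "nat \<times> nat"

datatype diagram = Diagram (dxings: "xing list") (darcs: "arc list")

datatype tangle = Tangle (xings: "xing list") (tarcs: "arc list")
  (tNW: nat) (tNE: nat) (tSW: nat) (tSE: nat)

fun xpts :: "xing \<Rightarrow> nat list" where
  "xpts (a, b, c, d) = [a, b, c, d]"

definition cross_pts :: "xing list \<Rightarrow> nat list" where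
  "cross_pts cs = concat (map xpts cs)"

definition arc_pts :: "arc list \<Rightarrow> nat list" where
  "arc_pts as = concat (map (\<lambda>(p, q). [p, q]) as)"

fun smooth :: "bool \<Rightarrow> xing \<Rightarrow> arc list" where
  "smooth True (a, b, c, d) = [(a, b), (c, d)]"
| "smooth False (a, b, c, d) = [(a, d), (b, c)]"

text \<open>A state assigns to crossing i the A-smoothing (True) or the B-smoothing (False).\<close>
definition states :: "nat \<Rightarrow> bool list set" where
  "states n = {s. length s = n}"

definition state_edges :: "xing list \<Rightarrow> arc list \<Rightarrow> bool list \<Rightarrow> arc set" where
  "state_edges cs as s = set as \<union> set (concat (map (\<lambda>(b, c). smooth b c) (zip s cs)))"

definition conn :: "arc set \<Rightarrow> (nat \<times> nat) set" where
  "conn E = (E \<union> E\<inverse>)\<^sup>*"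

definition dpts :: "xing list \<Rightarrow> arc list \<Rightarrow> nat set" where
  "dpts cs as = set (cross_pts cs) \<union> set (arc_pts as)"

definition Avar :: "rat fls" where
  "Avar = fls_X"

definition dloop :: "rat fls" where
  "dloop = - (Avar ^ 2) - inverse (Avar ^ 2)"

definition state_weight :: "bool list \<Rightarrow> rat fls" where
  "state_weight s = Avar powi (int (count_list s True) - int (count_list s False))"

text \<open>Bracket of a link diagram, normalised so that the unknot diagram has bracket 1.\<close>
definition bracket :: "diagram \<Rightarrow> rat fls" where
  "bracket D = (\<Sum>s\<in>states (length (dxings D)).
      state_weight s *
      dloop powi (int (card (dpts (dxings D) (darcs D) // conn (state_edges (dxings D) (darcs D) s))) - 1))"

definition tpts :: "tangle \<Rightarrow> nat set" where
  "tpts T = dpts (xings T) (tarcs T) \<union> {tNW T, tNE T, tSW T, tSE T}"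

definition tloops :: "tangle \<Rightarrow> bool list \<Rightarrow> nat" where
  "tloops T s = card {C \<in> tpts T // conn (state_edges (xings T) (tarcs T) s).
      tNW T \<notin> C \<and> tNE T \<notin> C \<and> tSW T \<notin> C \<and> tSE T \<notin> C}"

definition tcoef :: "tangle \<Rightarrow> ((nat \<times> nat) set \<Rightarrow> bool) \<Rightarrow> rat fls" where
  "tcoef T P = (\<Sum>s\<in>{s \<in> states (length (xings T)). P (conn (state_edges (xings T) (tarcs T) s))}.
      state_weight s * dloop ^ tloops T s)"

text \<open>Coefficients of <T> = alpha <[0]> + beta <[infinity]> (+ gamma <[NW-SE,NE-SW]>, the
last being zero for classical tangles).\<close>
definition alpha :: "tangle \<Rightarrow> rat fls" where
  "alpha T = tcoef T (\<lambda>R. (tNW T, tNE T) \<in> R)"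

definition beta :: "tangle \<Rightarrow> rat fls" where
  "beta T = tcoef T (\<lambda>R. (tNW T, tSW T) \<in> R)"

definition gamma :: "tangle \<Rightarrow> rat fls" where
  "gamma T = tcoef T (\<lambda>R. (tNW T, tSE T) \<in> R)"

definition tangle_wf :: "tangle \<Rightarrow> bool" where
  "tangle_wf T \<longleftrightarrow>
     distinct (cross_pts (xings T)) \<and>
     distinct [tNW T, tNE T, tSW T, tSE T] \<and>
     {tNW T, tNE T, tSW T, tSE T} \<inter> set (cross_pts (xings T)) = {} \<and>
     (\<forall>p. (p \<in> set (cross_pts (xings T)) \<union> {tNW T, tNE T, tSW T, tSE T}
              \<longrightarrow> count_list (arc_pts (tarcs T)) p = 1) \<and>
          (p \<notin> set (cross_pts (xings T)) \<union> {tNW T, tNE T, tSW T, tSE T}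
              \<longrightarrow> count_list (arc_pts (tarcs T)) p \<in> {0, 2}))"

fun map_xing :: "(nat \<Rightarrow> nat) \<Rightarrow> xing \<Rightarrow> xing" where
  "map_xing f (a, b, c, d) = (f a, f b, f c, f d)"

definition ren :: "(nat \<Rightarrow> nat) \<Rightarrow> tangle \<Rightarrow> tangle" where
  "ren f T = Tangle (map (map_xing f) (xings T)) (map (map_prod f f) (tarcs T))
     (f (tNW T)) (f (tNE T)) (f (tSW T)) (f (tSE T))"

definition tsum :: "tangle \<Rightarrow> tangle \<Rightarrow> tangle" where
  "tsum T U = (let T' = ren (\<lambda>p. 2 * p) T; U' = ren (\<lambda>p. 2 * p + 1) U in
     Tangle (xings T' @ xings U') (tarcs T' @ tarcs U' @ [(tNE T', tNW U'), (tSE T', tSW U')])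
       (tNW T') (tNE U') (tSW T') (tSE U'))"

definition numer :: "tangle \<Rightarrow> diagram" where
  "numer T = Diagram (xings T) (tarcs T @ [(tNW T, tNE T), (tSW T, tSE T)])"

text \<open>[1]: one crossing whose A-smoothing is [0] and B-smoothing is [infinity].\<close>
definition one_xing :: xing where "one_xing = (0, 1, 2, 3)"

definition one_tangle :: tangle where
  "one_tangle = Tangle [one_xing] [(4, 0), (5, 1), (6, 3), (7, 2)] 4 5 6 7"

text \<open>[-1]: its mirror image (A-smoothing [infinity], B-smoothing [0]).\<close>
definition mone_tangle :: tangle where
  "mone_tangle = Tangle [(1, 2, 3, 0)] [(4, 0), (5, 1), (6, 3), (7, 2)] 4 5 6 7"

definition heads :: "arc list \<Rightarrow> nat set" where
  "heads Or = set (map snd Or)"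

definition is_orientation :: "diagram \<Rightarrow> arc list \<Rightarrow> bool" where
  "is_orientation D Or \<longleftrightarrow>
     list_all2 (\<lambda>(p, q) e. e = (p, q) \<or> e = (q, p)) (darcs D) Or \<and>
     (\<forall>p. p \<notin> set (cross_pts (dxings D)) \<longrightarrow>
          count_list (map snd Or) p = count_list (map fst Or) p) \<and>
     (\<forall>(a, b, c, d) \<in> set (dxings D).
          (a \<in> heads Or) \<noteq> (c \<in> heads Or) \<and> (b \<in> heads Or) \<noteq> (d \<in> heads Or))"

text \<open>Sign of a crossing: +1 iff its A-smoothing is the orientation-respecting smoothing
(the standard characterisation of positive crossings).\<close>
fun xsign :: "arc list \<Rightarrow> xing \<Rightarrow> int" where
  "xsign Or (a, b, c, d) = (if (a \<in> heads Or) \<noteq> (b \<in> heads Or) then 1 else -1)"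

definition writhe :: "diagram \<Rightarrow> arc list \<Rightarrow> int" where
  "writhe D Or = sum_list (map (xsign Or) (dxings D))"

definition jones :: "diagram \<Rightarrow> arc list \<Rightarrow> rat fls" where
  "jones D Or = (- (Avar ^ 3)) powi (- writhe D Or) * bracket D"

end

theory Submission
  imports Defs
begin


lemma conn_refl[simp]: "(x,x) \<in> conn E"
  by (simp add: conn_def)

lemma conn_sym: "(x,y) \<in> conn E \<Longrightarrow> (y,x) \<in> conn E"
proof -
  assume "(x,y) \<in> conn E"
  then have "(y,x) \<in> ((E \<union> E\<inverse>)\<inverse>)\<^sup>*" unfolding conn_def by (rule rtrancl_converseI)
  moreover have "(E \<union> E\<inverse>)\<inverse> = E \<union> E\<inverse>" by auto
  ultimately show ?thesis unfolding conn_def by simp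
qed

lemma conn_trans: "(x,y) \<in> conn E \<Longrightarrow> (y,z) \<in> conn E \<Longrightarrow> (x,z) \<in> conn E"
  unfolding conn_def by (rule rtrancl_trans)

lemma conn_edge: "(x,y) \<in> E \<Longrightarrow> (x,y) \<in> conn E"
  unfolding conn_def by auto

lemma conn_mono: "E \<subseteq> F \<Longrightarrow> conn E \<subseteq> conn F"
  unfolding conn_def by (rule rtrancl_mono) auto

lemma conn_eqI: "E \<union> E\<inverse> = F \<union> F\<inverse> \<Longrightarrow> conn E = conn F"
  unfolding conn_def by simp

lemma conn_insert:
  "(a,b) \<in> conn (insert (u,v) E) \<longleftrightarrow> (a,b) \<in> conn E \<or>
     (((u,a) \<in> conn E \<or> (v,a) \<in> conn E) \<and> ((u,b) \<in> conn E \<or> (v,b) \<in> conn E))"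
proof
  assume "(a,b) \<in> conn (insert (u,v) E)"
  then have "(a,b) \<in> (insert (u,v) E \<union> (insert (u,v) E)\<inverse>)\<^sup>*" by (simp add: conn_def)
  then show "(a,b) \<in> conn E \<or>
     (((u,a) \<in> conn E \<or> (v,a) \<in> conn E) \<and> ((u,b) \<in> conn E \<or> (v,b) \<in> conn E))"
  proof (induction rule: rtrancl_induct)
    case base
    then show ?case by simp
  next
    case (step y z)
    have yz: "(y,z) \<in> E \<union> E\<inverse> \<or> (y,z) = (u,v) \<or> (y,z) = (v,u)" using step.hyps(2) by auto
    show ?case
    proof (cases "(y,z) \<in> E \<union> E\<inverse>")
      case True
      then have "(y,z) \<in> conn E" unfolding conn_def by auto
      then show ?thesis using step.IH by (meson conn_trans)
    next
      case False
      then have "(y,z) = (u,v) \<or> (y,z) = (v,u)" using yz by auto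
      then show ?thesis using step.IH by (auto intro: conn_sym)
    qed
  qed
next
  have sub: "conn E \<subseteq> conn (insert (u,v) E)" by (rule conn_mono) auto
  have uv: "(u,v) \<in> conn (insert (u,v) E)" by (rule conn_edge) auto
  assume "(a,b) \<in> conn E \<or>
     (((u,a) \<in> conn E \<or> (v,a) \<in> conn E) \<and> ((u,b) \<in> conn E \<or> (v,b) \<in> conn E))"
  then show "(a,b) \<in> conn (insert (u,v) E)"
    using sub uv by (meson conn_sym conn_trans subsetD)
qed

lemma conn_class_eq: "(x,y) \<in> conn E \<Longrightarrow> conn E `` {x} = conn E `` {y}"
  by (auto intro: conn_trans conn_sym)

lemma conn_class_eq_iff: "conn E `` {x} = conn E `` {y} \<longleftrightarrow> (x,y) \<in> conn E"
  by (metis Image_singleton_iff conn_class_eq conn_refl)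

lemma card_quot_insert:
  assumes "finite V" "u \<in> V" "v \<in> V"
  shows "card (V // conn (insert (u,v) E)) =
    (if (u,v) \<in> conn E then card (V // conn E) else card (V // conn E) - 1)"
proof (cases "(u,v) \<in> conn E")
  case True
  have "conn (insert (u,v) E) = conn E"
  proof (intro set_eqI; clarify)
    fix a b show "(a,b) \<in> conn (insert (u,v) E) \<longleftrightarrow> (a,b) \<in> conn E"
      unfolding conn_insert using True by (meson conn_sym conn_trans)
  qed
  then show ?thesis using True by simp
next
  case False
  let ?R = "conn E" and ?R' = "conn (insert (u,v) E)"
  define K where "K = ?R `` {u} \<union> ?R `` {v}"
  have cls: "?R' `` {x} = (if x \<in> K then K else ?R `` {x})" for x
  proof -
    have "?R' `` {x} = {b. (x,b) \<in> ?R \<or> (x \<in> K \<and> b \<in> K)}"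
      unfolding K_def using conn_insert[of x _ u v E] by (auto intro: conn_sym)
    also have "\<dots> = (if x \<in> K then K else ?R `` {x})"
      unfolding K_def by (auto intro: conn_sym conn_trans)
    finally show ?thesis .
  qed
  have Q: "V // ?R' = insert K ((V // ?R) - {?R``{u}, ?R``{v}})"
  proof
    show "V // ?R' \<subseteq> insert K ((V // ?R) - {?R``{u}, ?R``{v}})"
    proof
      fix C assume "C \<in> V // ?R'"
      then obtain x where x: "x \<in> V" "C = ?R' `` {x}" unfolding quotient_def by auto
      show "C \<in> insert K ((V // ?R) - {?R``{u}, ?R``{v}})"
      proof (cases "x \<in> K")
        case True then show ?thesis using x cls by auto
      next
        case nK: False
        then have "C = ?R `` {x}" using x cls by auto
        moreover have "?R``{x} \<noteq> ?R``{u}" "?R``{x} \<noteq> ?R``{v}"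
          using nK unfolding K_def conn_class_eq_iff by (auto intro: conn_sym)
        ultimately show ?thesis using x unfolding quotient_def by auto
      qed
    qed
  next
    show "insert K ((V // ?R) - {?R``{u}, ?R``{v}}) \<subseteq> V // ?R'"
    proof
      fix C assume C: "C \<in> insert K ((V // ?R) - {?R``{u}, ?R``{v}})"
      show "C \<in> V // ?R'"
      proof (cases "C = K")
        case True
        have "u \<in> K" unfolding K_def by auto
        then have "?R' `` {u} = K" using cls by simp
        then show ?thesis using True assms(2) unfolding quotient_def by auto
      next
        case False
        then obtain x where x: "x \<in> V" "C = ?R `` {x}" "C \<noteq> ?R``{u}" "C \<noteq> ?R``{v}"
          using C unfolding quotient_def by auto
        then have "x \<notin> K" unfolding K_def by (auto simp: conn_class_eq_iff intro: conn_sym)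
        then have "?R' `` {x} = C" using cls x by simp
        then show ?thesis using x unfolding quotient_def by auto
      qed
    qed
  qed
  have fin: "finite (V // ?R)" using assms(1) unfolding quotient_def by simp
  have uin: "?R``{u} \<in> V // ?R" "?R``{v} \<in> V // ?R"
    using assms unfolding quotient_def by auto
  have neq: "?R``{u} \<noteq> ?R``{v}" using False conn_class_eq_iff by metis
  have Knot: "K \<notin> (V // ?R) - {?R``{u}, ?R``{v}}"
  proof
    assume "K \<in> (V // ?R) - {?R``{u}, ?R``{v}}"
    then obtain y where y: "K = ?R``{y}" "K \<noteq> ?R``{u}" by (auto simp: quotient_def)
    have "u \<in> K" unfolding K_def by auto
    then have "(y,u) \<in> ?R" using y by auto
    then show False using y conn_class_eq by metis
  qed
  have "card (V // ?R') = card ((V // ?R) - {?R``{u}, ?R``{v}}) + 1"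
    unfolding Q using fin Knot by simp
  also have "card ((V // ?R) - {?R``{u}, ?R``{v}}) = card (V // ?R) - 2"
    using fin uin neq by (subst card_Diff_subset) auto
  finally have "card (V // ?R') = card (V // ?R) - 2 + 1" .
  moreover have "card (V // ?R) \<ge> 2"
  proof -
    have "card {?R``{u}, ?R``{v}} = 2" using neq by simp
    then show ?thesis using card_mono[OF fin, of "{?R``{u}, ?R``{v}}"] uin by simp
  qed
  ultimately show ?thesis using False by simp
qed

lemma conn_isolated:
  assumes "\<forall>p. (w,p) \<notin> E \<and> (p,w) \<notin> E" "(w,p) \<in> conn E"
  shows "p = w"
proof -
  have "(w,p) \<in> (E \<union> E\<inverse>)\<^sup>*" using assms(2) by (simp add: conn_def)
  then show ?thesis
    by (induction rule: rtrancl_induct) (use assms(1) in auto)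
qed

lemma quotient_insert: "insert w V // R = insert (R``{w}) (V // R)"
  unfolding quotient_def by auto

lemma series:
  assumes "finite V" "u \<in> V" "v \<in> V" "w \<notin> V" "\<forall>p. (w,p) \<notin> E \<and> (p,w) \<notin> E"
  shows "card (insert w V // conn (insert (w,v) (insert (u,w) E))) = card (V // conn (insert (u,v) E))"
proof -
  have cw: "conn E `` {w} = {w}" using conn_isolated[OF assms(5)] by auto
  have uw: "u \<noteq> w" "v \<noteq> w" using assms by auto
  have notin: "{w} \<notin> V // conn E"
  proof
    assume "{w} \<in> V // conn E"
    then obtain x where "x \<in> V" "conn E `` {x} = {w}" unfolding quotient_def by auto
    then show False using assms(4) conn_refl by (metis Image_singleton_iff singletonD)
  qed
  have c0: "card (insert w V // conn E) = card (V // conn E) + 1"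
    unfolding quotient_insert cw using notin assms(1) by (simp add: quotient_def)
  have nuw: "(u,w) \<notin> conn E" using conn_isolated[OF assms(5)] conn_sym uw by metis
  have c1: "card (insert w V // conn (insert (u,w) E)) = card (V // conn E)"
    using card_quot_insert[of "insert w V" u w E] assms nuw c0 by simp
  have wv: "(w,v) \<in> conn (insert (u,w) E) \<longleftrightarrow> (u,v) \<in> conn E"
    unfolding conn_insert using conn_isolated[OF assms(5)] uw by (auto dest: conn_sym)
  show ?thesis
    using card_quot_insert[of "insert w V" w v "insert (u,w) E"]
      card_quot_insert[of V u v E] assms c1 wv by simp
qed

lemma path_lemma:
  assumes "finite V" "a \<in> V" "b \<in> V" "q1 \<notin> V" "q2 \<notin> V" "q3 \<notin> V" "q4 \<notin> V"
    "distinct [q1,q2,q3,q4]" "\<forall>q\<in>{q1,q2,q3,q4}. \<forall>p. (q,p) \<notin> E \<and> (p,q) \<notin> E"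
  shows "card ((V \<union> {q1,q2,q3,q4}) // conn (E \<union> {(a,q1),(q1,q2),(q2,q3),(q3,q4),(q4,b)}))
     = card (V // conn (insert (a,b) E))"
proof -
  have ne: "a \<noteq> q1" "a \<noteq> q2" "a \<noteq> q3" "a \<noteq> q4" "b \<noteq> q1" "b \<noteq> q2" "b \<noteq> q3" "b \<noteq> q4"
    using assms by auto
  have s1: "card (insert q1 (V \<union> {q2,q3,q4}) // conn (insert (q1,q2) (insert (a,q1) (E \<union> {(q2,q3),(q3,q4),(q4,b)}))))
      = card ((V \<union> {q2,q3,q4}) // conn (insert (a,q2) (E \<union> {(q2,q3),(q3,q4),(q4,b)})))"
    by (rule series) (use assms ne in auto)
  have s2: "card (insert q2 (V \<union> {q3,q4}) // conn (insert (q2,q3) (insert (a,q2) (E \<union> {(q3,q4),(q4,b)}))))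
      = card ((V \<union> {q3,q4}) // conn (insert (a,q3) (E \<union> {(q3,q4),(q4,b)})))"
    by (rule series) (use assms ne in auto)
  have s3: "card (insert q3 (V \<union> {q4}) // conn (insert (q3,q4) (insert (a,q3) (E \<union> {(q4,b)}))))
      = card ((V \<union> {q4}) // conn (insert (a,q4) (E \<union> {(q4,b)})))"
    by (rule series) (use assms ne in auto)
  have s4: "card (insert q4 V // conn (insert (q4,b) (insert (a,q4) E)))
      = card (V // conn (insert (a,b) E))"
    by (rule series) (use assms ne in auto)
  have e1: "V \<union> {q1,q2,q3,q4} = insert q1 (V \<union> {q2,q3,q4})" by auto
  have e2: "E \<union> {(a,q1),(q1,q2),(q2,q3),(q3,q4),(q4,b)} = insert (q1,q2) (insert (a,q1) (E \<union> {(q2,q3),(q3,q4),(q4,b)}))" by auto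
  have e3: "V \<union> {q2,q3,q4} = insert q2 (V \<union> {q3,q4})" by auto
  have e4: "insert (a,q2) (E \<union> {(q2,q3),(q3,q4),(q4,b)}) = insert (q2,q3) (insert (a,q2) (E \<union> {(q3,q4),(q4,b)}))" by auto
  have e5: "V \<union> {q3,q4} = insert q3 (V \<union> {q4})" by auto
  have e6: "insert (a,q3) (E \<union> {(q3,q4),(q4,b)}) = insert (q3,q4) (insert (a,q3) (E \<union> {(q4,b)}))" by auto
  have e7: "V \<union> {q4} = insert q4 V" by auto
  have e8: "insert (a,q4) (E \<union> {(q4,b)}) = insert (q4,b) (insert (a,q4) E)" by auto
  show ?thesis using s1 s2 s3 s4 unfolding e1 e2 e3 e4 e5 e6 e7 e8 by simp
qed

lemma two_paths:
  assumes "finite V" "a \<in> V" "b \<in> V" "c \<in> V" "d \<in> V"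
    "\<forall>q\<in>Q. q \<notin> V" "Q = {q1,q2,q3,q4,q5,q6,q7,q8}"
    "distinct [q1,q2,q3,q4,q5,q6,q7,q8]" "\<forall>q\<in>Q. \<forall>p. (q,p) \<notin> E \<and> (p,q) \<notin> E"
    "F \<union> F\<inverse> = G \<union> G\<inverse>"
    "G = E \<union> {(a,q1),(q1,q2),(q2,q3),(q3,q4),(q4,b),(c,q5),(q5,q6),(q6,q7),(q7,q8),(q8,d)}"
  shows "card ((V \<union> Q) // conn F) = card (V // conn (insert (a,b) (insert (c,d) E)))"
proof -
  have "conn F = conn G" by (rule conn_eqI) fact
  have p2: "card (((V \<union> {q1,q2,q3,q4}) \<union> {q5,q6,q7,q8}) // conn ((E \<union> {(a,q1),(q1,q2),(q2,q3),(q3,q4),(q4,b)}) \<union> {(c,q5),(q5,q6),(q6,q7),(q7,q8),(q8,d)}))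
     = card ((V \<union> {q1,q2,q3,q4}) // conn (insert (c,d) (E \<union> {(a,q1),(q1,q2),(q2,q3),(q3,q4),(q4,b)})))"
    by (rule path_lemma) (use assms in auto)
  have p1: "card ((V \<union> {q1,q2,q3,q4}) // conn (insert (c,d) E \<union> {(a,q1),(q1,q2),(q2,q3),(q3,q4),(q4,b)}))
     = card (V // conn (insert (a,b) (insert (c,d) E)))"
    by (rule path_lemma) (use assms in auto)
  have eV: "V \<union> Q = (V \<union> {q1,q2,q3,q4}) \<union> {q5,q6,q7,q8}" using assms(7) by auto
  have eG: "G = (E \<union> {(a,q1),(q1,q2),(q2,q3),(q3,q4),(q4,b)}) \<union> {(c,q5),(q5,q6),(q6,q7),(q7,q8),(q8,d)}"
    using assms(11) by auto
  have eE: "insert (c,d) (E \<union> {(a,q1),(q1,q2),(q2,q3),(q3,q4),(q4,b)}) = insert (c,d) E \<union> {(a,q1),(q1,q2),(q2,q3),(q3,q4),(q4,b)}"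
    by auto
  show ?thesis using p1 p2 unfolding \<open>conn F = conn G\<close> eV eG eE by simp
qed



lemma conn_image_from:
  assumes "inj f" "(f x, z) \<in> conn (map_prod f f ` E)"
  shows "\<exists>y. z = f y \<and> (x,y) \<in> conn E"
proof -
  have "(f x, z) \<in> (map_prod f f ` E \<union> (map_prod f f ` E)\<inverse>)\<^sup>*" using assms(2) by (simp add: conn_def)
  then show ?thesis
  proof (induction rule: rtrancl_induct)
    case base then show ?case by auto
  next
    case (step y z)
    then obtain y' where y': "y = f y'" "(x,y') \<in> conn E" by auto
    from step.hyps(2) obtain a b where ab: "(a,b) \<in> E" "(y,z) = (f a, f b) \<or> (y,z) = (f b, f a)"
      by auto
    show ?case
    proof (cases "(y,z) = (f a, f b)")
      case True
      then have "a = y'" using y' assms(1) by (simp add: inj_eq)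
      then show ?thesis using True ab y' by (metis conn_edge conn_trans prod.inject)
    next
      case False
      then have "(y,z) = (f b, f a)" using ab by blast
      then have "b = y'" using y' assms(1) by (simp add: inj_eq)
      then show ?thesis using \<open>(y,z) = (f b, f a)\<close> ab y' by (metis conn_edge conn_sym conn_trans prod.inject)
    qed
  qed
qed

lemma conn_image_to:
  assumes "(x, y) \<in> conn E"
  shows "(f x, f y) \<in> conn (map_prod f f ` E)"
proof -
  have "(x, y) \<in> (E \<union> E\<inverse>)\<^sup>*" using assms by (simp add: conn_def)
  then show ?thesis
  proof (induction rule: rtrancl_induct)
    case base then show ?case by simp
  next
    case (step y z)
    have "(f y, f z) \<in> map_prod f f ` E \<or> (f z, f y) \<in> map_prod f f ` E"
      using step.hyps(2) by auto
    then have "(f y, f z) \<in> conn (map_prod f f ` E)"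
      by (meson conn_edge conn_sym)
    then show ?case using step.IH conn_trans by blast
  qed
qed

lemma conn_image_iff:
  assumes "inj f" shows "(f x, f y) \<in> conn (map_prod f f ` E) \<longleftrightarrow> (x,y) \<in> conn E"
proof
  assume "(f x, f y) \<in> conn (map_prod f f ` E)"
  then obtain y' where "f y = f y'" "(x,y') \<in> conn E" using conn_image_from[OF assms] by blast
  then show "(x,y) \<in> conn E" using assms by (simp add: inj_eq)
qed (rule conn_image_to)

lemma conn_image_class:
  assumes "inj f" shows "conn (map_prod f f ` E) `` {f x} = f ` (conn E `` {x})"
proof
  show "conn (map_prod f f ` E) `` {f x} \<subseteq> f ` (conn E `` {x})"
    using conn_image_from[OF assms, of x _ E] by blast
  show "f ` (conn E `` {x}) \<subseteq> conn (map_prod f f ` E) `` {f x}"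
    using conn_image_to[of x _ E f] by blast
qed

lemma conn_insert_class:
  "conn (insert (u,v) E) `` {x} =
    (if x \<in> conn E `` {u} \<union> conn E `` {v} then conn E `` {u} \<union> conn E `` {v} else conn E `` {x})"
proof -
  define K where "K = conn E `` {u} \<union> conn E `` {v}"
  have "conn (insert (u,v) E) `` {x} = {b. (x,b) \<in> conn E \<or> (x \<in> K \<and> b \<in> K)}"
    unfolding K_def using conn_insert[of x _ u v E] by (auto intro: conn_sym)
  also have "\<dots> = (if x \<in> K then K else conn E `` {x})"
    unfolding K_def by (auto intro: conn_sym conn_trans)
  finally show ?thesis unfolding K_def .
qed

lemma card_quot_image:
  assumes "inj f"
  shows "card (f ` V // conn (map_prod f f ` E)) = card (V // conn E)"
proof -
  have "f ` V // conn (map_prod f f ` E) = (\<lambda>C. f ` C) ` (V // conn E)"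
    unfolding quotient_def using conn_image_class[OF assms] by auto
  moreover have "inj_on (\<lambda>C. f ` C) (V // conn E)"
    by (rule inj_onI) (use assms in \<open>simp add: inj_image_eq_iff\<close>)
  ultimately show ?thesis by (simp add: card_image)
qed

lemma arc_pts_Nil[simp]: "arc_pts [] = []" by (simp add: arc_pts_def)
lemma arc_pts_Cons[simp]: "arc_pts ((u,v) # es) = u # v # arc_pts es" by (simp add: arc_pts_def)
lemma arc_pts_append[simp]: "arc_pts (xs @ ys) = arc_pts xs @ arc_pts ys" by (simp add: arc_pts_def)

lemma not_touch:
  "count_list (arc_pts es) p = 0 \<Longrightarrow> \<forall>q. (p,q) \<notin> set es \<and> (q,p) \<notin> set es"
  by (induction es) (auto split: if_splits)

lemma half:
  assumes "u \<in> C" "c u \<le> (1::nat)" "card {p\<in>C. c p = 1} \<in> {0,2}" "finite {p\<in>C. c p = 1}"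
    "c u = 0 \<Longrightarrow> C = {u}" "\<forall>p\<in>C. c' p = c p + (if p = u then 1 else 0)"
  shows "card {p\<in>C. c' p = 1} = 1"
proof (cases "c u = 0")
  case True
  then have "{p\<in>C. c' p = 1} = {u}" using assms(5,6) by auto
  then show ?thesis by simp
next
  case False
  then have cu: "c u = 1" using assms(2) by simp
  then have "card {p\<in>C. c p = 1} \<noteq> 0" using assms(1,4) by auto
  then have "card {p\<in>C. c p = 1} = 2" using assms(3) by auto
  then obtain y where y: "y \<in> C" "c y = 1" "y \<noteq> u" "\<forall>z\<in>C. c z = 1 \<longrightarrow> z = u \<or> z = y"
    unfolding card_2_iff' using assms(1) cu by auto metis
  have "{p\<in>C. c' p = 1} = {y}" using y assms(6) cu by (auto split: if_splits) (metis One_nat_def Suc_1 n_not_Suc_n)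
  then show ?thesis by simp
qed




lemma pairing:
  assumes "\<forall>p. count_list (arc_pts es) p \<le> 2"
  shows "card {p \<in> conn (set es) `` {x}. count_list (arc_pts es) p = 1} \<in> {0,2}"
  using assms
proof (induction es arbitrary: x)
  case Nil
  then show ?case by simp
next
  case (Cons e es)
  obtain u v where e: "e = (u,v)" by force
  define c where "c = count_list (arc_pts es)"
  define c' where "c' = count_list (arc_pts (e # es))"
  have c'c: "c' p = c p + (if p = u then 1 else 0) + (if p = v then 1 else 0)" for p
    unfolding c'_def c_def e by simp
  have le2: "c' p \<le> 2" for p using Cons.prems c'_def by simp
  have IH: "card {p \<in> conn (set es) `` {y}. c p = 1} \<in> {0,2}" for y
    using Cons.IH[of y] Cons.prems le2 c'c c_def by (metis add_leE)
  have finO: "finite {p \<in> X. c p = 1}" for X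
  proof (rule finite_subset)
    show "{p \<in> X. c p = 1} \<subseteq> set (arc_pts es)" unfolding c_def
      by (auto simp: count_list_0_iff) (metis count_list_0_iff nat.simps(3))
  qed simp
  have iso: "c p = 0 \<Longrightarrow> conn (set es) `` {p} = {p}" for p
    using conn_isolated[OF not_touch[of es p]] c_def by auto
  let ?R = "conn (set es)"
  define K where "K = ?R `` {u} \<union> ?R `` {v}"
  have setE: "set (e # es) = insert (u,v) (set es)" using e by simp
  show ?case
  proof (cases "x \<in> K")
    case False
    then have cls: "conn (set (e#es)) `` {x} = ?R `` {x}"
      unfolding setE conn_insert_class K_def by simp
    have "\<forall>p \<in> ?R `` {x}. p \<noteq> u \<and> p \<noteq> v" using False unfolding K_def
      by (auto intro: conn_sym)
    then have "{p \<in> ?R `` {x}. c' p = 1} = {p \<in> ?R `` {x}. c p = 1}" using c'c by auto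
    then show ?thesis using IH[of x] cls c'_def by simp
  next
    case True
    then have cls: "conn (set (e#es)) `` {x} = K"
      unfolding setE conn_insert_class K_def by simp
    have goal: "card {p \<in> K. c' p = 1} \<in> {0,2}"
    proof (cases "u = v")
      case True
      then have "c u = 0" using le2[of u] c'c[of u] by simp
      then have "K = {u}" using iso True K_def by simp
      then show ?thesis using c'c True by simp
    next
      case uv: False
      show ?thesis
      proof (cases "(u,v) \<in> ?R")
        case True
        have cu0: "c u \<noteq> 0" using iso True uv by force
        have cu: "c u = 1" using cu0 le2[of u] c'c[of u] uv by simp
        have cv0: "c v \<noteq> 0" using iso conn_sym[OF True] uv by force
        have cv: "c v = 1" using cv0 le2[of v] c'c[of v] uv by simp
        have KK: "K = ?R `` {u}" unfolding K_def using conn_class_eq[OF True] by simp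
        have "u \<in> {p \<in> ?R `` {u}. c p = 1}" using cu by simp
        then have "card {p \<in> ?R `` {u}. c p = 1} \<noteq> 0" using finO[of "?R `` {u}"] card_0_eq by blast
        then have "card {p \<in> ?R `` {u}. c p = 1} = 2" using IH[of u] by auto
        then obtain a b where ab: "{p \<in> ?R `` {u}. c p = 1} = {a,b}" unfolding card_2_iff by blast
        have "u \<in> {a,b}" "v \<in> {a,b}" using ab[symmetric] cu cv True by auto
        then have O: "\<forall>z \<in> ?R `` {u}. c z = 1 \<longrightarrow> z = u \<or> z = v"
          using ab uv by blast
        have "{p \<in> K. c' p = 1} = {}"
        proof -
          { fix p assume p: "p \<in> ?R `` {u}" "c' p = 1"
            have False
            proof (cases "p = u \<or> p = v")
              case True then show False using c'c[of p] cu cv uv p by auto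
            next
              case False then show False using O c'c[of p] p by auto
            qed }
          then show ?thesis unfolding KK by blast
        qed
        then show ?thesis by (metis card.empty insert_iff)
      next
        case False
        have disj: "?R `` {u} \<inter> ?R `` {v} = {}"
          using False by (auto intro: conn_sym conn_trans)
        have vnot: "v \<notin> ?R `` {u}" and unot: "u \<notin> ?R `` {v}" using False
          by (auto intro: conn_sym)
        have A: "card {p \<in> ?R `` {u}. c' p = 1} = 1"
        proof (rule half[where c = c])
          show "c u \<le> 1" using le2[of u] c'c[of u] uv by simp
          show "c u = 0 \<Longrightarrow> ?R `` {u} = {u}" using iso by simp
          show "\<forall>p\<in>?R `` {u}. c' p = c p + (if p = u then 1 else 0)" using c'c vnot by auto
          show "finite {p\<in>?R `` {u}. c p = 1}" by (rule finO)
          show "card {p\<in>?R `` {u}. c p = 1} \<in> {0,2}" by (rule IH)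
        qed simp
        have B: "card {p \<in> ?R `` {v}. c' p = 1} = 1"
        proof (rule half[where c = c])
          show "c v \<le> 1" using le2[of v] c'c[of v] uv by simp
          show "c v = 0 \<Longrightarrow> ?R `` {v} = {v}" using iso by simp
          show "\<forall>p\<in>?R `` {v}. c' p = c p + (if p = v then 1 else 0)" using c'c unot by auto
          show "finite {p\<in>?R `` {v}. c p = 1}" by (rule finO)
          show "card {p\<in>?R `` {v}. c p = 1} \<in> {0,2}" by (rule IH)
        qed simp
        have "{p \<in> K. c' p = 1} = {p \<in> ?R `` {u}. c' p = 1} \<union> {p \<in> ?R `` {v}. c' p = 1}"
          unfolding K_def by auto
        moreover have "card (\<dots>) = 2"
          using A B disj by (subst card_Un_disjoint) (auto intro: card_ge_0_finite)
        ultimately show ?thesis by simp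
      qed
    qed
    then show ?thesis using cls c'_def by simp
  qed
qed



lemma count_distinct: "distinct xs \<Longrightarrow> count_list xs p = (if p \<in> set xs then 1 else 0)"
  by (induction xs) auto

lemma cross_pts_Nil[simp]: "cross_pts [] = []" by (simp add: cross_pts_def)
lemma cross_pts_Cons[simp]: "cross_pts (c # cs) = xpts c @ cross_pts cs" by (simp add: cross_pts_def)
lemma cross_pts_append[simp]: "cross_pts (xs @ ys) = cross_pts xs @ cross_pts ys" by (simp add: cross_pts_def)

lemma count_smooth:
  "length s = length cs \<Longrightarrow>
   count_list (arc_pts (concat (map (\<lambda>(b, c). smooth b c) (zip s cs)))) p = count_list (cross_pts cs) p"
proof (induction cs arbitrary: s)
  case Nil then show ?case by simp
next
  case (Cons c cs)
  then obtain b s' where s: "s = b # s'" "length s' = length cs" by (cases s) auto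
  obtain x1 x2 x3 x4 where c: "c = (x1,x2,x3,x4)" by (cases c) auto
  show ?case using Cons.IH[OF s(2)] s c by (cases b) auto
qed

lemma sum_states_Suc:
  "(\<Sum>s\<in>states (Suc n). f s) = (\<Sum>s\<in>states n. f (s @ [True]) + f (s @ [False]))"
proof -
  have eq: "states (Suc n) = (\<lambda>(s,b). s @ [b]) ` (states n \<times> UNIV)"
  proof
    show "states (Suc n) \<subseteq> (\<lambda>(s,b). s @ [b]) ` (states n \<times> UNIV)"
    proof
      fix s assume "s \<in> states (Suc n)"
      then have "length s = Suc n" by (simp add: states_def)
      then have s: "s = butlast s @ [last s]" "length (butlast s) = n"
        by (metis append_butlast_last_id list.size(3) nat.distinct(1)) (simp add: \<open>length s = Suc n\<close>)
      have "(butlast s, last s) \<in> states n \<times> UNIV" using s(2) by (simp add: states_def)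
      then show "s \<in> (\<lambda>(s,b). s @ [b]) ` (states n \<times> UNIV)"
        by (rule rev_image_eqI) (use s(1) in simp)
    qed
  qed (auto simp: states_def)
  have inj: "inj_on (\<lambda>(s,b). s @ [b]) (states n \<times> (UNIV :: bool set))"
    by (rule inj_onI) auto
  have fin: "finite (states n)" by (simp add: states_def finite_list_length)
  have "(\<Sum>s\<in>states (Suc n). f s) = (\<Sum>(s,b)\<in>states n \<times> UNIV. f (s @ [b]))"
    unfolding eq by (subst sum.reindex[OF inj]) (simp add: case_prod_beta)
  also have "\<dots> = (\<Sum>s\<in>states n. \<Sum>b\<in>UNIV. f (s @ [b]))"
    by (rule sum.cartesian_product[symmetric])
  also have "\<dots> = (\<Sum>s\<in>states n. f (s @ [True]) + f (s @ [False]))"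
    by (simp add: UNIV_bool add.commute)
  finally show ?thesis .
qed


lemma Avar_nz[simp]: "Avar \<noteq> 0" by (simp add: Avar_def fls_X_nonzero)

lemma weight_snoc:
  "state_weight (s @ [b]) = state_weight s * (if b then Avar else inverse Avar)"
proof -
  define m where "m = int (count_list s True) - int (count_list s False)"
  show ?thesis
  proof (cases b)
    case True
    then have "int (count_list (s @ [b]) True) - int (count_list (s @ [b]) False) = m + 1"
      unfolding m_def by simp
    then have "state_weight (s @ [b]) = Avar powi (m + 1)" by (simp only: state_weight_def)
    moreover have "state_weight s = Avar powi m" by (simp add: state_weight_def m_def)
    ultimately show ?thesis using True by (simp add: power_int_add_1)
  next
    case False
    then have "int (count_list (s @ [b]) True) - int (count_list (s @ [b]) False) = m + (-1)"
      unfolding m_def by simp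
    then have "state_weight (s @ [b]) = Avar powi (m + (-1))" by (simp only: state_weight_def)
    moreover have "state_weight s = Avar powi m" by (simp add: state_weight_def m_def)
    ultimately show ?thesis using False by (simp add: power_int_diff divide_inverse)
  qed
qed


lemma state_edges_snoc:
  "length s = length cs \<Longrightarrow>
   state_edges (cs @ [x]) as (s @ [b]) = state_edges cs as s \<union> set (smooth b x)"
  unfolding state_edges_def by auto

lemma smooth_map: "smooth b (map_xing h c) = map (map_prod h h) (smooth b c)"
  by (cases c; cases b) auto

lemma concat_smooth_map:
  "concat (map (\<lambda>(b, c). smooth b c) (zip s (map (map_xing h) cs)))
   = map (map_prod h h) (concat (map (\<lambda>(b, c). smooth b c) (zip s cs)))"
proof (induction cs arbitrary: s)
  case Nil then show ?case by simp
next
  case (Cons c cs)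
  then show ?case by (cases s) (auto simp: smooth_map)
qed

lemma state_edges_map:
  "state_edges (map (map_xing h) cs) (map (map_prod h h) as @ ex) s
   = map_prod h h ` state_edges cs as s \<union> set ex"
  unfolding state_edges_def concat_smooth_map by (simp only: set_append set_map image_Un Un_ac)




lemma card_filter_sum:
  "finite A \<Longrightarrow> card {p\<in>A. P p} = (\<Sum>p\<in>A. if P p then 1 else 0)"
  by (simp add: sum.inter_filter[symmetric])

lemma sum4: "distinct [a,b,c,d] \<Longrightarrow> (\<Sum>p\<in>{a,b,c,d}. f p) = f a + f b + f c + (f d :: nat)"
  by (simp add: add.assoc)

lemma card4: "distinct [a,b,c,d] \<Longrightarrow> card {p\<in>{a,b,c,d}. P p} =
   (if P a then 1 else 0) + (if P b then 1 else 0) + (if P c then 1 else 0) + (if P d then 1 else 0)"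
  by (subst card_filter_sum) (simp_all only: sum4 finite.intros)

lemma four:
  fixes R :: "(nat \<times> nat) set"
  assumes dist: "distinct [a,b,c,d]" and sym: "\<And>x y. (x,y) \<in> R \<Longrightarrow> (y,x) \<in> R"
    and card: "\<And>x. x \<in> {a,b,c,d} \<Longrightarrow> card {p\<in>{a,b,c,d}. (x,p) \<in> R} = 2"
    and refl: "\<And>x. (x,x) \<in> R"
  shows "((a,b) \<in> R \<longleftrightarrow> (c,d) \<in> R) \<and> ((a,c) \<in> R \<longleftrightarrow> (b,d) \<in> R) \<and> ((a,d) \<in> R \<longleftrightarrow> (b,c) \<in> R)
    \<and> ((a,b) \<in> R \<or> (a,c) \<in> R \<or> (a,d) \<in> R)
    \<and> \<not> ((a,b) \<in> R \<and> (a,c) \<in> R) \<and> \<not> ((a,b) \<in> R \<and> (a,d) \<in> R) \<and> \<not> ((a,c) \<in> R \<and> (a,d) \<in> R)"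
proof -
  have sy: "(x,y) \<in> R \<longleftrightarrow> (y,x) \<in> R" for x y using sym by blast
  have ca: "card {p\<in>{a,b,c,d}. (a,p) \<in> R} = 2" and cb: "card {p\<in>{a,b,c,d}. (b,p) \<in> R} = 2"
    and cc: "card {p\<in>{a,b,c,d}. (c,p) \<in> R} = 2" and cd: "card {p\<in>{a,b,c,d}. (d,p) \<in> R} = 2"
    using card by auto
  note cs = ca cb cc cd
  have "(if (a,b) \<in> R then 1 else 0) + (if (a,c) \<in> R then 1 else 0) + (if (a,d) \<in> R then 1 else (0::nat)) = 1"
    "(if (a,b) \<in> R then 1 else 0) + (if (b,c) \<in> R then 1 else 0) + (if (b,d) \<in> R then 1 else (0::nat)) = 1"
    "(if (a,c) \<in> R then 1 else 0) + (if (b,c) \<in> R then 1 else 0) + (if (c,d) \<in> R then 1 else (0::nat)) = 1"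
    "(if (a,d) \<in> R then 1 else 0) + (if (b,d) \<in> R then 1 else 0) + (if (c,d) \<in> R then 1 else (0::nat)) = 1"
    using cs dist refl by (simp_all only: card4) (simp_all add: sy[of b a] sy[of c a] sy[of d a] sy[of c b] sy[of d b] sy[of d c])
  then show ?thesis
    by (cases "(a,b) \<in> R"; cases "(a,c) \<in> R"; cases "(a,d) \<in> R"; cases "(b,c) \<in> R"; cases "(b,d) \<in> R"; cases "(c,d) \<in> R") simp_all
qed

lemma quot_split:
  assumes "finite P" "B \<subseteq> P"
  shows "card (P // conn E) = card {C \<in> P // conn E. C \<inter> B = {}} + card ((\<lambda>x. conn E `` {x}) ` B)"
proof -
  have fin: "finite (P // conn E)" using assms(1) unfolding quotient_def by simp
  have "(\<lambda>x. conn E `` {x}) ` B = {C \<in> P // conn E. C \<inter> B \<noteq> {}}"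
  proof
    show "(\<lambda>x. conn E `` {x}) ` B \<subseteq> {C \<in> P // conn E. C \<inter> B \<noteq> {}}"
      using assms(2) unfolding quotient_def by force
    show "{C \<in> P // conn E. C \<inter> B \<noteq> {}} \<subseteq> (\<lambda>x. conn E `` {x}) ` B"
    proof
      fix C assume "C \<in> {C \<in> P // conn E. C \<inter> B \<noteq> {}}"
      then obtain y b where "C = conn E `` {y}" "b \<in> C" "b \<in> B" unfolding quotient_def by auto
      then have "C = conn E `` {b}" using conn_class_eq by auto
      then show "C \<in> (\<lambda>x. conn E `` {x}) ` B" using \<open>b \<in> B\<close> by auto
    qed
  qed
  moreover have "P // conn E = {C \<in> P // conn E. C \<inter> B = {}} \<union> {C \<in> P // conn E. C \<inter> B \<noteq> {}}"
    by auto
  moreover have "card ({C \<in> P // conn E. C \<inter> B = {}} \<union> {C \<in> P // conn E. C \<inter> B \<noteq> {}})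
     = card {C \<in> P // conn E. C \<inter> B = {}} + card {C \<in> P // conn E. C \<inter> B \<noteq> {}}"
    by (rule card_Un_disjoint) (use fin in auto)
  ultimately show ?thesis by simp
qed



definition pat :: "(nat \<times> nat) set \<Rightarrow> nat \<Rightarrow> nat \<Rightarrow> nat \<Rightarrow> nat \<Rightarrow> bool" where
  "pat R a b c d \<longleftrightarrow> ((a,b) \<in> R \<longleftrightarrow> (c,d) \<in> R) \<and> ((a,c) \<in> R \<longleftrightarrow> (b,d) \<in> R) \<and> ((a,d) \<in> R \<longleftrightarrow> (b,c) \<in> R)
    \<and> ((a,b) \<in> R \<or> (a,c) \<in> R \<or> (a,d) \<in> R)
    \<and> \<not> ((a,b) \<in> R \<and> (a,c) \<in> R) \<and> \<not> ((a,b) \<in> R \<and> (a,d) \<in> R) \<and> \<not> ((a,c) \<in> R \<and> (a,d) \<in> R)"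

lemma image_card2:
  assumes "pat (conn E) a b c d"
  shows "card ((\<lambda>x. conn E `` {x}) ` {a,b,c,d}) = 2"
proof -
  let ?R = "conn E"
  have sy: "(x,y) \<in> ?R \<longleftrightarrow> (y,x) \<in> ?R" for x y by (meson conn_sym)
  consider "(a,b) \<in> ?R" "(c,d) \<in> ?R" "(a,c) \<notin> ?R"
    | "(a,c) \<in> ?R" "(b,d) \<in> ?R" "(a,b) \<notin> ?R"
    | "(a,d) \<in> ?R" "(b,c) \<in> ?R" "(a,b) \<notin> ?R"
    using assms unfolding pat_def by blast
  then show ?thesis
  proof cases
    case 1
    then have "(\<lambda>x. ?R `` {x}) ` {a,b,c,d} = {?R``{a}, ?R``{c}}" "?R``{a} \<noteq> ?R``{c}"
      using conn_class_eq_iff[of E] sy by auto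
    then show ?thesis by simp
  next
    case 2
    then have "(\<lambda>x. ?R `` {x}) ` {a,b,c,d} = {?R``{a}, ?R``{b}}" "?R``{a} \<noteq> ?R``{b}"
      using conn_class_eq_iff[of E] sy by auto
    then show ?thesis by simp
  next
    case 3
    then have "(\<lambda>x. ?R `` {x}) ` {a,b,c,d} = {?R``{a}, ?R``{b}}" "?R``{a} \<noteq> ?R``{b}"
      using conn_class_eq_iff[of E] sy by auto
    then show ?thesis by simp
  qed
qed

lemma S_facts:
  assumes wf: "tangle_wf S" and len: "length s = length (xings S)"
  defines "R \<equiv> conn (state_edges (xings S) (tarcs S) s)"
  shows "pat R (tNW S) (tNE S) (tSW S) (tSE S)"
    and "card (dpts (xings S) (tarcs S) // R) = tloops S s + 2"
    and "{tNW S, tNE S, tSW S, tSE S} \<subseteq> dpts (xings S) (tarcs S)"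
proof -
  define B where "B = {tNW S, tNE S, tSW S, tSE S}"
  define X where "X = set (cross_pts (xings S))"
  define es where "es = tarcs S @ concat (map (\<lambda>(b, c). smooth b c) (zip s (xings S)))"
  have setes: "set es = state_edges (xings S) (tarcs S) s" by (simp add: es_def state_edges_def)
  have cnt: "count_list (arc_pts es) p = count_list (arc_pts (tarcs S)) p + (if p \<in> X then 1 else 0)" for p
    using wf len unfolding es_def X_def tangle_wf_def by (simp add: count_smooth count_distinct)
  have BX: "B \<inter> X = {}" and distB: "distinct [tNW S, tNE S, tSW S, tSE S]"
    using wf unfolding tangle_wf_def B_def X_def by auto
  have arcs1: "p \<in> X \<union> B \<Longrightarrow> count_list (arc_pts (tarcs S)) p = 1" for p
    using wf unfolding tangle_wf_def B_def X_def by blast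
  have arcs02: "p \<notin> X \<union> B \<Longrightarrow> count_list (arc_pts (tarcs S)) p \<in> {0,2}" for p
    using wf unfolding tangle_wf_def B_def X_def by blast
  have le2: "\<forall>p. count_list (arc_pts es) p \<le> 2"
  proof
    fix p show "count_list (arc_pts es) p \<le> 2"
      using cnt[of p] arcs1[of p] arcs02[of p] BX by (cases "p \<in> X \<union> B") auto
  qed
  have one: "count_list (arc_pts es) p = 1 \<longleftrightarrow> p \<in> B" for p
    using cnt[of p] arcs1[of p] arcs02[of p] BX by (cases "p \<in> X \<union> B") auto
  have Bsub: "B \<subseteq> dpts (xings S) (tarcs S)"
  proof
    fix p assume "p \<in> B"
    then have "count_list (arc_pts (tarcs S)) p = 1" using arcs1 by auto
    then have "p \<in> set (arc_pts (tarcs S))" by (metis count_list_0_iff zero_neq_one)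
    then show "p \<in> dpts (xings S) (tarcs S)" by (simp add: dpts_def)
  qed
  then show "{tNW S, tNE S, tSW S, tSE S} \<subseteq> dpts (xings S) (tarcs S)" by (simp add: B_def)
  have c2: "card {p\<in>B. (x,p) \<in> R} = 2" if "x \<in> B" for x
  proof -
    have "card {p \<in> conn (set es) `` {x}. count_list (arc_pts es) p = 1} \<in> {0,2}"
      by (rule pairing[OF le2])
    moreover have "{p \<in> conn (set es) `` {x}. count_list (arc_pts es) p = 1} = {p\<in>B. (x,p) \<in> R}"
      unfolding one R_def setes by auto
    moreover have "x \<in> {p\<in>B. (x,p) \<in> R}" using that by (simp add: R_def)
    moreover have "finite {p\<in>B. (x,p) \<in> R}" by (simp add: B_def)
    ultimately have "card {p\<in>B. (x,p) \<in> R} \<noteq> 0 \<and> card {p\<in>B. (x,p) \<in> R} \<in> {0,2}"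
      using card_0_eq by (metis empty_iff)
    then show ?thesis by auto
  qed
  show P: "pat R (tNW S) (tNE S) (tSW S) (tSE S)"
    unfolding pat_def
  proof (rule four[OF distB])
    show "(x,y) \<in> R \<Longrightarrow> (y,x) \<in> R" for x y unfolding R_def by (rule conn_sym)
    show "(x,x) \<in> R" for x unfolding R_def by simp
    show "x \<in> {tNW S, tNE S, tSW S, tSE S} \<Longrightarrow> card {p \<in> {tNW S, tNE S, tSW S, tSE S}. (x,p) \<in> R} = 2" for x
      using c2 unfolding B_def by blast
  qed
  have fin: "finite (dpts (xings S) (tarcs S))" by (simp add: dpts_def)
  have tp: "tpts S = dpts (xings S) (tarcs S)" using Bsub unfolding tpts_def B_def by auto
  have tl: "tloops S s = card {C \<in> dpts (xings S) (tarcs S) // R. C \<inter> B = {}}"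
    unfolding tloops_def tp R_def B_def by (rule arg_cong[where f = card]) auto
  show "card (dpts (xings S) (tarcs S) // R) = tloops S s + 2"
    unfolding tl using quot_split[OF fin Bsub, of "state_edges (xings S) (tarcs S) s"]
      image_card2[of "state_edges (xings S) (tarcs S) s"] P unfolding R_def B_def by simp
qed



lemma pat_cases:
  assumes "pat (conn E) a b c d"
  obtains (ab) "(a,b) \<in> conn E" "(b,a) \<in> conn E" "(c,d) \<in> conn E" "(d,c) \<in> conn E"
     "(a,c) \<notin> conn E" "(c,a) \<notin> conn E" "(a,d) \<notin> conn E" "(d,a) \<notin> conn E"
     "(b,c) \<notin> conn E" "(c,b) \<notin> conn E" "(b,d) \<notin> conn E" "(d,b) \<notin> conn E"
  | (ac) "(a,c) \<in> conn E" "(c,a) \<in> conn E" "(b,d) \<in> conn E" "(d,b) \<in> conn E"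
     "(a,b) \<notin> conn E" "(b,a) \<notin> conn E" "(a,d) \<notin> conn E" "(d,a) \<notin> conn E"
     "(b,c) \<notin> conn E" "(c,b) \<notin> conn E" "(c,d) \<notin> conn E" "(d,c) \<notin> conn E"
  | (ad) "(a,d) \<in> conn E" "(d,a) \<in> conn E" "(b,c) \<in> conn E" "(c,b) \<in> conn E"
     "(a,b) \<notin> conn E" "(b,a) \<notin> conn E" "(a,c) \<notin> conn E" "(c,a) \<notin> conn E"
     "(b,d) \<notin> conn E" "(d,b) \<notin> conn E" "(c,d) \<notin> conn E" "(d,c) \<notin> conn E"
proof -
  have sy: "(x,y) \<in> conn E \<longleftrightarrow> (y,x) \<in> conn E" for x y by (meson conn_sym)
  show ?thesis using assms that unfolding pat_def sy[of b a] sy[of c a] sy[of d a] sy[of c b] sy[of d b] sy[of d c]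
    by blast
qed

lemma two_inserts:
  assumes "finite V" "a \<in> V" "b \<in> V" "c \<in> V" "d \<in> V"
  shows "card (V // conn (insert (a,b) (insert (c,d) E))) =
    (let n1 = (if (c,d) \<in> conn E then card (V // conn E) else card (V // conn E) - 1) in
      if (a,b) \<in> conn (insert (c,d) E) then n1 else n1 - 1)"
  using card_quot_insert[OF assms(1,2,3), of "insert (c,d) E"] card_quot_insert[OF assms(1,4,5), of E]
  by (simp add: Let_def)

lemma cross_pts_map: "cross_pts (map (map_xing h) cs) = map h (cross_pts cs)"
proof (induction cs)
  case Nil then show ?case by simp
next
  case (Cons c cs) then show ?case by (cases c) auto
qed

lemma arc_pts_map: "arc_pts (map (map_prod h h) as) = map h (arc_pts as)"
  by (induction as) auto

lemma tsum_one:
  "xings (tsum S one_tangle) = map (map_xing (\<lambda>p. 2*p)) (xings S) @ [(1,3,5,7)]"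
  "tarcs (tsum S one_tangle) = map (map_prod (\<lambda>p. 2*p) (\<lambda>p. 2*p)) (tarcs S) @
     [(9,1),(11,3),(13,7),(15,5),(2*tNE S, 9),(2*tSE S, 13)]"
  "tNW (tsum S one_tangle) = 2 * tNW S" "tNE (tsum S one_tangle) = 11"
  "tSW (tsum S one_tangle) = 2 * tSW S" "tSE (tsum S one_tangle) = 15"
  by (simp_all add: tsum_def ren_def one_tangle_def one_xing_def Let_def)

lemma tsum_mone:
  "xings (tsum S mone_tangle) = map (map_xing (\<lambda>p. 2*p)) (xings S) @ [(3,5,7,1)]"
  "tarcs (tsum S mone_tangle) = map (map_prod (\<lambda>p. 2*p) (\<lambda>p. 2*p)) (tarcs S) @
     [(9,1),(11,3),(13,7),(15,5),(2*tNE S, 9),(2*tSE S, 13)]"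
  "tNW (tsum S mone_tangle) = 2 * tNW S" "tNE (tsum S mone_tangle) = 11"
  "tSW (tsum S mone_tangle) = 2 * tSW S" "tSE (tsum S mone_tangle) = 15"
  by (simp_all add: tsum_def ren_def mone_tangle_def Let_def)



lemma odd_notin_img: "odd (q::nat) \<Longrightarrow> q \<notin> (\<lambda>p. 2*p) ` P"
  by auto

lemma odd_notin_edges: "odd (q::nat) \<Longrightarrow> (q,y) \<notin> map_prod (\<lambda>p. 2*p) (\<lambda>p. 2*p) ` E \<and> (y,q) \<notin> map_prod (\<lambda>p. 2*p) (\<lambda>p. 2*p) ` E"
  by auto

lemma conv_insert: "(insert (a,b) r)\<inverse> = insert (b,a) (r\<inverse>)" by auto

lemma symeq: "Sm \<union> Sm\<inverse> = M \<union> M\<inverse> \<Longrightarrow> (A \<union> Sm) \<union> (A \<union> Sm)\<inverse> = (A \<union> M) \<union> (A \<union> M)\<inverse>"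
  by auto

lemma inj_double: "inj (\<lambda>p::nat. 2*p)"
  by (rule injI) simp

lemma count_L:
  assumes wf: "tangle_wf S" and len: "length s = length (xings S)"
    and xs: "xings T = map (map_xing (\<lambda>p. 2*p)) (xings S) @ [x]"
    and ar: "tarcs T = map (map_prod (\<lambda>p. 2*p) (\<lambda>p. 2*p)) (tarcs S) @
     [(9,1),(11,3),(13,7),(15,5),(2*tNE S, 9),(2*tSE S, 13)]"
    and bd: "tNW T = 2 * tNW S" "tNE T = 11" "tSW T = 2 * tSW S" "tSE T = 15"
    and x: "x = (1,3,5,7) \<or> x = (3,5,7,1)"
  shows "card (dpts (dxings (numer T)) (darcs (numer T)) // conn (state_edges (dxings (numer T)) (darcs (numer T)) (s @ [b])))
    = (if (x = (1,3,5,7)) = b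
       then (if (tNW S, tNE S) \<in> conn (state_edges (xings S) (tarcs S) s) then tloops S s + 2 else tloops S s + 1)
       else (if (tNW S, tSW S) \<in> conn (state_edges (xings S) (tarcs S) s) then tloops S s + 2 else tloops S s + 1))"
proof -
  define h where "h = (\<lambda>p::nat. 2*p)"
  define E0 where "E0 = state_edges (xings S) (tarcs S) s"
  define hE where "hE = map_prod h h ` E0"
  define P where "P = dpts (xings S) (tarcs S)"
  define V where "V = h ` P"
  define Q where "Q = {9,1,3,11,13,7,5,15::nat}"
  define nw where "nw = tNW S"
  define ne where "ne = tNE S"
  define sw where "sw = tSW S"
  define se where "se = tSE S"
  define ex :: "(nat \<times> nat) list" where "ex = [(9,1),(11,3),(13,7),(15,5),(2*ne, 9),(2*se, 13),(2*nw,11),(2*sw,15)]"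
  have inj: "inj h" unfolding h_def by (rule inj_double)
  have dx: "dxings (numer T) = map (map_xing h) (xings S) @ [x]" using xs by (simp add: numer_def h_def)
  have da: "darcs (numer T) = map (map_prod h h) (tarcs S) @ ex"
    using ar bd by (simp add: numer_def h_def ex_def nw_def ne_def sw_def se_def)
  have SE: "state_edges (dxings (numer T)) (darcs (numer T)) (s @ [b]) = hE \<union> set ex \<union> set (smooth b x)"
    unfolding dx da using len
    by (simp add: state_edges_snoc state_edges_map hE_def E0_def)
  have Bsub: "{nw, ne, sw, se} \<subseteq> P" using S_facts(3)[OF wf len] by (simp add: P_def nw_def ne_def sw_def se_def)
  have DP: "dpts (dxings (numer T)) (darcs (numer T)) = V \<union> Q"
  proof -
    have "dpts (dxings (numer T)) (darcs (numer T)) = h ` P \<union> set (xpts x) \<union> set (arc_pts ex)"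
      unfolding dx da dpts_def P_def by (auto simp: cross_pts_map arc_pts_map)
    also have "\<dots> = V \<union> Q" using x Bsub unfolding V_def Q_def ex_def h_def by auto
    finally show ?thesis .
  qed
  have finV: "finite V" unfolding V_def P_def dpts_def by simp
  have inV: "2*nw \<in> V" "2*ne \<in> V" "2*sw \<in> V" "2*se \<in> V" using Bsub unfolding V_def h_def by auto
  have QV: "\<forall>q\<in>Q. q \<notin> V" unfolding Q_def V_def h_def by (auto; presburger)
  have Qfree: "\<forall>q\<in>Q. \<forall>p. (q,p) \<notin> hE \<and> (p,q) \<notin> hE" unfolding Q_def hE_def h_def
    using odd_notin_edges by auto
  have cV: "card (V // conn hE) = tloops S s + 2"
    unfolding V_def hE_def card_quot_image[OF inj] P_def E0_def by (rule S_facts(2)[OF wf len])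
  have img: "(h u, h v) \<in> conn hE \<longleftrightarrow> (u,v) \<in> conn E0" for u v
    unfolding hE_def by (rule conn_image_iff[OF inj])
  have img2: "(2*u, 2*v) \<in> conn hE \<longleftrightarrow> (u,v) \<in> conn E0" for u v using img[of u v] by (simp add: h_def)
  have P: "pat (conn E0) nw ne sw se" unfolding E0_def nw_def ne_def sw_def se_def by (rule S_facts(1)[OF wf len])
  show ?thesis
  proof (cases "(x = (1,3,5,7)) = b")
    case True
    then have sm: "set (smooth b x) \<union> (set (smooth b x))\<inverse> = {(1,3),(5,7)} \<union> {(1,3),(5,7)}\<inverse>"
      using x by (cases b) auto
    have "card ((V \<union> Q) // conn (hE \<union> set ex \<union> set (smooth b x)))
       = card (V // conn (insert (2*ne, 2*nw) (insert (2*se, 2*sw) hE)))"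
    proof (rule two_paths[of V "2*ne" "2*nw" "2*se" "2*sw" Q 9 1 3 11 13 7 5 15 hE _
          "hE \<union> {(2*ne,9),(9,1),(1,3),(3,11),(11,2*nw),(2*se,13),(13,7),(7,5),(5,15),(15,2*sw)}"])
      show "Q = {9, 1, 3, 11, 13, 7, 5, 15}" by (simp add: Q_def)
      show "hE \<union> set ex \<union> set (smooth b x) \<union> (hE \<union> set ex \<union> set (smooth b x))\<inverse> =
        (hE \<union> {(2*ne,9),(9,1),(1,3),(3,11),(11,2*nw),(2*se,13),(13,7),(7,5),(5,15),(15,2*sw)}) \<union>
        (hE \<union> {(2*ne,9),(9,1),(1,3),(3,11),(11,2*nw),(2*se,13),(13,7),(7,5),(5,15),(15,2*sw)})\<inverse>"
      proof (rule trans[OF symeq[OF sm]])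
        show "hE \<union> set ex \<union> {(1,3),(5,7)} \<union> (hE \<union> set ex \<union> {(1,3),(5,7)})\<inverse> =
          (hE \<union> {(2*ne,9),(9,1),(1,3),(3,11),(11,2*nw),(2*se,13),(13,7),(7,5),(5,15),(15,2*sw)}) \<union> (hE \<union> {(2*ne,9),(9,1),(1,3),(3,11),(11,2*nw),(2*se,13),(13,7),(7,5),(5,15),(15,2*sw)})\<inverse>"
          unfolding ex_def
          by (intro equalityI; simp only: converse_Un conv_insert set_simps Un_insert_left Un_insert_right Un_empty_left Un_empty_right insert_subset Un_subset_iff; simp; blast)
      qed
    qed (use finV inV QV Qfree in auto)
    moreover have "card (V // conn (insert (2*ne, 2*nw) (insert (2*se, 2*sw) hE)))
        = (if (nw,ne) \<in> conn E0 then tloops S s + 2 else tloops S s + 1)"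
      apply (subst two_inserts[OF finV inV(2) inV(1) inV(4) inV(3)])
      apply (cases rule: pat_cases[OF P])
        apply (simp_all only: conn_insert img2 cV Let_def)
        apply simp_all
      done
    ultimately show ?thesis unfolding SE DP using True by (simp add: nw_def ne_def E0_def)
  next
    case False
    then have sm: "set (smooth b x) \<union> (set (smooth b x))\<inverse> = {(1,7),(3,5)} \<union> {(1,7),(3,5)}\<inverse>"
      using x by (cases b) auto
    have "card ((V \<union> Q) // conn (hE \<union> set ex \<union> set (smooth b x)))
       = card (V // conn (insert (2*ne, 2*se) (insert (2*nw, 2*sw) hE)))"
    proof (rule two_paths[of V "2*ne" "2*se" "2*nw" "2*sw" Q 9 1 7 13 11 3 5 15 hE _
          "hE \<union> {(2*ne,9),(9,1),(1,7),(7,13),(13,2*se),(2*nw,11),(11,3),(3,5),(5,15),(15,2*sw)}"])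
      show "Q = {9, 1, 7, 13, 11, 3, 5, 15}" by (auto simp: Q_def)
      show "hE \<union> set ex \<union> set (smooth b x) \<union> (hE \<union> set ex \<union> set (smooth b x))\<inverse> =
        (hE \<union> {(2*ne,9),(9,1),(1,7),(7,13),(13,2*se),(2*nw,11),(11,3),(3,5),(5,15),(15,2*sw)}) \<union>
        (hE \<union> {(2*ne,9),(9,1),(1,7),(7,13),(13,2*se),(2*nw,11),(11,3),(3,5),(5,15),(15,2*sw)})\<inverse>"
      proof (rule trans[OF symeq[OF sm]])
        show "hE \<union> set ex \<union> {(1,7),(3,5)} \<union> (hE \<union> set ex \<union> {(1,7),(3,5)})\<inverse> =
          (hE \<union> {(2*ne,9),(9,1),(1,7),(7,13),(13,2*se),(2*nw,11),(11,3),(3,5),(5,15),(15,2*sw)}) \<union> (hE \<union> {(2*ne,9),(9,1),(1,7),(7,13),(13,2*se),(2*nw,11),(11,3),(3,5),(5,15),(15,2*sw)})\<inverse>"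
          unfolding ex_def
          by (intro equalityI; simp only: converse_Un conv_insert set_simps Un_insert_left Un_insert_right Un_empty_left Un_empty_right insert_subset Un_subset_iff; simp; blast)
      qed
    qed (use finV inV QV Qfree in auto)
    moreover have "card (V // conn (insert (2*ne, 2*se) (insert (2*nw, 2*sw) hE)))
        = (if (nw,sw) \<in> conn E0 then tloops S s + 2 else tloops S s + 1)"
      apply (subst two_inserts[OF finV inV(2) inV(4) inV(1) inV(3)])
      apply (cases rule: pat_cases[OF P])
        apply (simp_all only: conn_insert img2 cV Let_def)
        apply simp_all
      done
    ultimately show ?thesis unfolding SE DP using False by (simp add: nw_def sw_def E0_def)
  qed
qed



lemma alg:
  fixes X :: "rat fls"
  assumes "X \<noteq> 0"
  defines "d \<equiv> - (X ^ 2) - inverse (X ^ 2)"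
  shows "X * d ^ (k+1) + inverse X * d ^ k = - (X^3) * d ^ k"
    and "X * d ^ k + inverse X * d ^ (k+1) = - inverse (X^3) * d ^ k"
proof -
  have 1: "X * d + inverse X = - (X^3)" unfolding d_def using assms
    by (simp add: field_simps power2_eq_square power3_eq_cube)
  have 2: "X + inverse X * d = - inverse (X^3)" unfolding d_def using assms
    by (simp add: field_simps power2_eq_square power3_eq_cube)
  show "X * d ^ (k+1) + inverse X * d ^ k = - (X^3) * d ^ k"
    using arg_cong[OF 1, of "\<lambda>z. z * d ^ k"] by (simp add: algebra_simps)
  show "X * d ^ k + inverse X * d ^ (k+1) = - inverse (X^3) * d ^ k"
    using arg_cong[OF 2, of "\<lambda>z. z * d ^ k"] by (simp add: algebra_simps)
qed

lemma powi_m1: "x powi (int (k + 2) - 1) = x ^ (k+1)" "x powi (int (k + 1) - 1) = x ^ k"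
proof -
  have "int (k + 2) - 1 = int (k+1)" "int (k + 1) - 1 = int k" by simp_all
  then show "x powi (int (k + 2) - 1) = x ^ (k+1)" "x powi (int (k + 1) - 1) = x ^ k"
    by (simp_all only: power_int_of_nat)
qed

lemma sum_if_mult:
  "finite A \<Longrightarrow> (\<Sum>x\<in>A. if P x then c * f x else 0) = (c::'a::comm_ring_1) * (\<Sum>x\<in>{x\<in>A. P x}. f x)"
  by (simp add: sum.inter_filter sum_distrib_left) (rule sum.cong, auto)

lemma bracket_formula:
  assumes wf: "tangle_wf S"
    and xs: "xings T = map (map_xing (\<lambda>p. 2*p)) (xings S) @ [x]"
    and ar: "tarcs T = map (map_prod (\<lambda>p. 2*p) (\<lambda>p. 2*p)) (tarcs S) @
     [(9,1),(11,3),(13,7),(15,5),(2*tNE S, 9),(2*tSE S, 13)]"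
    and bd: "tNW T = 2 * tNW S" "tNE T = 11" "tSW T = 2 * tSW S" "tSE T = 15"
    and x: "x = (1,3,5,7) \<or> x = (3,5,7,1)"
  shows "bracket (numer T) =
    (if x = (1,3,5,7) then - (Avar^3) * alpha S - inverse (Avar^3) * beta S
     else - inverse (Avar^3) * alpha S - Avar^3 * beta S) + (Avar + inverse Avar) * gamma S"
proof -
  define n where "n = length (xings S)"
  define X where "X = Avar"
  define d where "d = dloop"
  define R where "R s = conn (state_edges (xings S) (tarcs S) s)" for s
  define t where "t s = state_weight s * d ^ tloops S s" for s
  define A where "A s = ((tNW S, tNE S) \<in> R s)" for s
  define B where "B s = ((tNW S, tSW S) \<in> R s)" for s
  define C where "C s = ((tNW S, tSE S) \<in> R s)" for s
  define c1 where "c1 = (if x = (1,3,5,7) then - (X^3) else - inverse (X^3))"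
  define c2 where "c2 = (if x = (1,3,5,7) then - inverse (X^3) else - (X^3))"
  define c3 where "c3 = X + inverse X"
  have Xnz: "X \<noteq> 0" by (simp add: X_def)
  have dd: "d = - (X ^ 2) - inverse (X ^ 2)" by (simp add: d_def X_def dloop_def)
  have len: "length (dxings (numer T)) = Suc n" using xs by (simp add: numer_def n_def)
  let ?g = "\<lambda>s. state_weight s * dloop powi (int (card (dpts (dxings (numer T)) (darcs (numer T)) //
      conn (state_edges (dxings (numer T)) (darcs (numer T)) s))) - 1)"
  have fin: "finite (states n)" by (simp add: states_def finite_list_length)
  have step: "?g (s @ [True]) + ?g (s @ [False]) =
      (if A s then c1 * t s else 0) + (if B s then c2 * t s else 0) + (if C s then c3 * t s else 0)"
    if s: "s \<in> states n" for s
  proof -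
    have ls: "length s = length (xings S)" using s by (simp add: states_def n_def)
    note cL = count_L[OF wf ls xs ar bd x]
    have P: "pat (R s) (tNW S) (tNE S) (tSW S) (tSE S)" unfolding R_def by (rule S_facts(1)[OF wf ls])
    have wT: "state_weight (s @ [True]) = state_weight s * X" and
      wF: "state_weight (s @ [False]) = state_weight s * inverse X"
      by (simp_all add: weight_snoc X_def)
    have e1: "X * d ^ (k+1) + inverse X * d ^ k = - (X^3) * d ^ k" for k using alg(1)[OF Xnz] dd by simp
    have e2: "X * d ^ k + inverse X * d ^ (k+1) = - inverse (X^3) * d ^ k" for k using alg(2)[OF Xnz] dd by simp
    define k where "k = tloops S s"
    define W where "W = state_weight s"
    have g1: "W * X * d powi (int (k + 2) - 1) + W * inverse X * d powi (int (k + 1) - 1) = - (X^3) * (W * d ^ k)"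
    proof -
      have "W * X * d ^ (k+1) + W * inverse X * d ^ k = W * (X * d ^ (k+1) + inverse X * d ^ k)"
        by (simp add: algebra_simps)
      also have "\<dots> = W * (- (X^3) * d ^ k)" by (simp only: e1)
      finally show ?thesis unfolding powi_m1 by (simp add: algebra_simps)
    qed
    have g2: "W * X * d powi (int (k + 1) - 1) + W * inverse X * d powi (int (k + 2) - 1) = - inverse (X^3) * (W * d ^ k)"
    proof -
      have "W * X * d ^ k + W * inverse X * d ^ (k+1) = W * (X * d ^ k + inverse X * d ^ (k+1))"
        by (simp add: algebra_simps)
      also have "\<dots> = W * (- inverse (X^3) * d ^ k)" by (simp only: e2)
      finally show ?thesis unfolding powi_m1 by (simp add: algebra_simps)
    qed
    have g3: "W * X * d powi (int (k + 1) - 1) + W * inverse X * d powi (int (k + 1) - 1) = (X + inverse X) * (W * d ^ k)"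
      unfolding powi_m1 by (simp add: algebra_simps)
    have cT: "card (dpts (dxings (numer T)) (darcs (numer T)) // conn (state_edges (dxings (numer T)) (darcs (numer T)) (s @ [True])))
      = (if x = (1,3,5,7) then (if A s then k + 2 else k + 1) else (if B s then k + 2 else k + 1))"
      using cL[of True] by (simp add: A_def B_def R_def k_def)
    have cF: "card (dpts (dxings (numer T)) (darcs (numer T)) // conn (state_edges (dxings (numer T)) (darcs (numer T)) (s @ [False])))
      = (if x = (1,3,5,7) then (if B s then k + 2 else k + 1) else (if A s then k + 2 else k + 1))"
      using cL[of False] by (simp add: A_def B_def R_def k_def)
    have lhs: "?g (s @ [True]) + ?g (s @ [False]) = W * X * d powi (int (card (dpts (dxings (numer T)) (darcs (numer T)) // conn (state_edges (dxings (numer T)) (darcs (numer T)) (s @ [True])))) - 1)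
       + W * inverse X * d powi (int (card (dpts (dxings (numer T)) (darcs (numer T)) // conn (state_edges (dxings (numer T)) (darcs (numer T)) (s @ [False])))) - 1)"
      unfolding wT wF W_def d_def by simp
    have tk: "t s = W * d ^ k" unfolding t_def W_def k_def ..
    have ex1: "\<not> (A s \<and> B s)" "\<not> (A s \<and> C s)" "\<not> (B s \<and> C s)" "A s \<or> B s \<or> C s"
      using P unfolding pat_def A_def B_def C_def by blast+
    show ?thesis
    proof (cases "x = (1,3,5,7)")
      case True
      show ?thesis
        unfolding lhs unfolding cT cF tk c1_def c2_def c3_def using True ex1
        by (cases "A s"; cases "B s"; cases "C s") (simp_all only: if_True if_False simp_thms g1 g2 g3, simp_all)
    next
      case False
      show ?thesis
        unfolding lhs unfolding cT cF tk c1_def c2_def c3_def using False ex1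
        by (cases "A s"; cases "B s"; cases "C s") (simp_all only: if_True if_False simp_thms g1 g2 g3, simp_all)
    qed
  qed
  have "bracket (numer T) = (\<Sum>s\<in>states n. ?g (s @ [True]) + ?g (s @ [False]))"
    unfolding bracket_def len by (rule sum_states_Suc)
  also have "\<dots> = (\<Sum>s\<in>states n. (if A s then c1 * t s else 0) + (if B s then c2 * t s else 0) + (if C s then c3 * t s else 0))"
    by (rule sum.cong) (simp_all add: step)
  also have "\<dots> = c1 * (\<Sum>s\<in>{s\<in>states n. A s}. t s) + c2 * (\<Sum>s\<in>{s\<in>states n. B s}. t s) + c3 * (\<Sum>s\<in>{s\<in>states n. C s}. t s)"
    using fin by (simp only: sum.distrib sum_if_mult)
  also have "\<dots> = c1 * alpha S + c2 * beta S + c3 * gamma S"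
    unfolding alpha_def beta_def gamma_def tcoef_def t_def A_def B_def C_def R_def n_def d_def by simp
  finally show ?thesis unfolding c1_def c2_def c3_def X_def by (simp add: algebra_simps)
qed



lemma X12: "Avar ^ 12 \<noteq> 1"
proof
  assume "Avar ^ 12 = 1"
  then have "fls_subdegree (fls_X ^ 12 :: rat fls) = fls_subdegree (1 :: rat fls)" by (simp add: Avar_def)
  then show False by (simp add: fls_subdegree_fls_X_pow)
qed

theorem mainTheorem5:
  fixes S :: tangle and Or :: "arc list"
  assumes "tangle_wf S"
    and "gamma S = 0"
    and "is_orientation (numer (tsum S one_tangle)) Or"
    and "xsign Or (map_xing (\<lambda>p. 2 * p + 1) one_xing) = -1"
    and "jones (numer (tsum S one_tangle)) Or = jones (numer (tsum S mone_tangle)) Or"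
  shows "alpha S = 0 \<and> beta S = - (Avar ^ 3) * bracket (numer (tsum S one_tangle))"
proof -
  define X where "X = Avar"
  define a where "a = alpha S"
  define b where "b = beta S"
  define BL where "BL = bracket (numer (tsum S one_tangle))"
  define BL' where "BL' = bracket (numer (tsum S mone_tangle))"
  have Xnz: "X \<noteq> 0" by (simp add: X_def)
  have bL: "BL = - (X^3) * a - inverse (X^3) * b"
    using bracket_formula[OF assms(1) tsum_one] assms(2) by (simp add: BL_def X_def a_def b_def)
  have bL': "BL' = - inverse (X^3) * a - X^3 * b"
    using bracket_formula[OF assms(1) tsum_mone] assms(2) by (simp add: BL'_def X_def a_def b_def)
  define H where "H = heads Or"
  define w0 where "w0 = sum_list (map (xsign Or) (map (map_xing (\<lambda>p. 2*p)) (xings S)))"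
  have x1: "map_xing (\<lambda>p. 2 * p + 1) one_xing = (1,3,5,7)" by (simp add: one_xing_def)
  have s1: "xsign Or (1,3,5,7) = -1" using assms(4) x1 by simp
  have ori: "(1 \<in> H) \<noteq> (5 \<in> H)" "(3 \<in> H) \<noteq> (7 \<in> H)"
  proof -
    have "(1,3,5,7) \<in> set (dxings (numer (tsum S one_tangle)))" by (simp add: numer_def tsum_one)
    then show "(1 \<in> H) \<noteq> (5 \<in> H)" "(3 \<in> H) \<noteq> (7 \<in> H)"
      using assms(3) unfolding is_orientation_def H_def by fastforce+
  qed
  have e13: "(1 \<in> H) = (3 \<in> H)" proof (rule ccontr) assume "(1 \<in> H) \<noteq> (3 \<in> H)" then have "xsign Or (1,3,5,7) = 1" unfolding H_def by (simp only: xsign.simps) simp then show False using s1 by simp qed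
  have "(3 \<in> H) \<noteq> (5 \<in> H)" using e13 ori by blast
  then have s2: "xsign Or (3,5,7,1) = 1" unfolding H_def by (simp only: xsign.simps) simp
  have d1: "dxings (numer (tsum S one_tangle)) = map (map_xing (\<lambda>p. 2*p)) (xings S) @ [(1,3,5,7)]"
    by (simp add: numer_def tsum_one)
  have d2: "dxings (numer (tsum S mone_tangle)) = map (map_xing (\<lambda>p. 2*p)) (xings S) @ [(3,5,7,1)]"
    by (simp add: numer_def tsum_mone)
  have wL: "writhe (numer (tsum S one_tangle)) Or = w0 - 1"
    unfolding writhe_def w0_def d1 by (simp only: map_append sum_list_append list.map sum_list_simps s1)
  have wL': "writhe (numer (tsum S mone_tangle)) Or = w0 + 1"
    unfolding writhe_def w0_def d2 by (simp only: map_append sum_list_append list.map sum_list_simps s2) simp?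
  define c where "c = - (Avar ^ 3)"
  have cnz: "c \<noteq> 0" by (simp add: c_def)
  have J: "c powi (- (w0 - 1)) * BL = c powi (- (w0 + 1)) * BL'"
    using assms(5) unfolding jones_def wL wL' c_def BL_def BL'_def .
  have "c powi (w0 + 1) * (c powi (- (w0 - 1)) * BL) = c powi (w0 + 1) * (c powi (- (w0 + 1)) * BL')"
    using J by simp
  then have "c powi ((w0 + 1) + (- (w0 - 1))) * BL = c powi ((w0 + 1) + (- (w0 + 1))) * BL'"
    by (simp only: power_int_add[OF disjI1[OF cnz]] mult.assoc)
  then have "c powi 2 * BL = BL'" by simp
  then have J2: "X^6 * BL = BL'" by (simp add: c_def X_def power_int_numeral)
  have "X^6 * (- (X^3) * a - inverse (X^3) * b) = - inverse (X^3) * a - X^3 * b"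
    using J2 bL bL' by simp
  moreover have "X^6 * (- (X^3) * a - inverse (X^3) * b) = - ((X^6 * X^3) * a) - (X^6 * inverse (X^3)) * b"
    by (simp add: algebra_simps)
  moreover have i3: "X^6 * inverse (X^3) = X^3" using Xnz by (simp add: field_simps power_add[symmetric])
  moreover have "X^6 * X^3 = X^9" by (simp add: power_add[symmetric])
  ultimately have "- (X^9 * a) - X^3 * b = - inverse (X^3) * a - X^3 * b" by (simp only:)
  then have "X^9 * a = inverse (X^3) * a" by algebra
  then have "X^3 * (X^9 * a) = X^3 * (inverse (X^3) * a)" by (rule arg_cong)
  moreover have "X^3 * (X^9 * a) = X^12 * a" by (simp add: mult.assoc[symmetric] power_add[symmetric])
  moreover have "X^3 * (inverse (X^3) * a) = a" using Xnz by (simp add: mult.assoc[symmetric])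
  ultimately have "X^12 * a = a" by metis
  then have "(X^12 - 1) * a = 0" by (simp add: algebra_simps)
  moreover have "X^12 - 1 \<noteq> 0" using X12 by (simp add: X_def)
  ultimately have a0: "a = 0" by simp
  have "b = - (X^3) * BL" using bL a0 Xnz by (simp add: field_simps)
  then show ?thesis using a0 unfolding a_def b_def BL_def X_def by simp
qed

end
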